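(* Let $E=(A\subset B)\in\mathcal S$ have Klein tableau $\Pi=[\gamma^0,\ldots,\gamma^e;\varphi^2,\ldots,\varphi^e]$ and let $s\le e$. Then the embedding $E\!\downarrow_s=(p^sA\subset B)$ has Klein tableau $$\Pi(E\!\downarrow_s)=[\gamma^s,\ldots,\gamma^e;\varphi^{2+s},\ldots,\varphi^e]=\Pi|_{e-s}^e.$$
   Context: Let $R$ be a commutative principal ideal domain, $p$ a generator of a maximal ideal, $k=R/(p)$. A $p$-module is a finite-length $R$-module annihilated by some power of $p$. For a $p$-module $B$, $\mathrm{type}(B)$ is the partition $\beta$ with conjugate $\beta'_i=\dim_kp^{i-1}B/p^iB$. $\mathcal S$ is the category of embeddings $(A\subset B)$ of submodules in $p$-modules. Partitions are drawn with the $i$-th column of length equal to the $i$-th part, rows numbered from the top. Klein tableau of $E=(A\subset B)$, $e$ the exponent of $A$: $\Pi(E)=[\gamma^0,\ldots,\gamma^e;\varphi^2,\ldots,\varphi^e]$ with $\gamma^i=\mathrm{type}(B/p^iA)$, and $\varphi^\ell$ the unique map from the boxes of the skew diagram $\gamma^\ell\setminus\gamma^{\ell-1}$ to positive integers, weakly increasing from left to right in each row, such that for $r\ge1$ the number of boxes in row $m$ with value $r$ equals $(\gamma^{\ell,r})'_m-(\gamma^{\ell,r-1})'_m$, where $\gamma^{\ell,r}=\mathrm{type}\big(B/(p^\ell A+p(p^{\ell-2}A\cap p^rB))\big)$. Restriction: for $u\le\ell\le e$, $\Pi|_u^\ell=[\gamma^{\ell-u},\ldots,\gamma^\ell;\varphi^{\ell-u+2},\ldots,\varphi^\ell]$,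 regarded as a Klein tableau whose stripe $\gamma^{\ell-u+j}\setminus\gamma^{\ell-u+j-1}$ is labelled $j$, subscripts retained. *)

theory Defs
  imports Complex_Main
begin

definition is_ideal :: "'r::comm_ring_1 set \<Rightarrow> bool" where
  "is_ideal I \<longleftrightarrow> 0 \<in> I \<and> (\<forall>x\<in>I. \<forall>y\<in>I. x + y \<in> I) \<and> (\<forall>x\<in>I. \<forall>r. r * x \<in> I)"

definition pideal :: "'r::comm_ring_1 \<Rightarrow> 'r set" where
  "pideal a = {r * a | r. True}"

definition is_PID :: "'r::idom itself \<Rightarrow> bool" where
  "is_PID _ \<longleftrightarrow> (\<forall>I::'r set. is_ideal I \<longrightarrow> (\<exists>a. I = pideal a))"

definition maximal_ideal :: "'r::comm_ring_1 set \<Rightarrow> bool" where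
  "maximal_ideal M \<longleftrightarrow> is_ideal M \<and> M \<noteq> UNIV \<and>
     (\<forall>I. is_ideal I \<and> M \<subseteq> I \<longrightarrow> I = M \<or> I = UNIV)"

definition pmul :: "('r::comm_ring_1 \<Rightarrow> 'm::ab_group_add \<Rightarrow> 'm) \<Rightarrow> 'r \<Rightarrow> nat \<Rightarrow> 'm set \<Rightarrow> 'm set" where
  "pmul scale p i X = {scale (p ^ i) x | x. x \<in> X}"

definition msum :: "'m::ab_group_add set \<Rightarrow> 'm set \<Rightarrow> 'm set" where
  "msum X Y = {x + y | x y. x \<in> X \<and> y \<in> Y}"

definition finite_length :: "('r::comm_ring_1 \<Rightarrow> 'm::ab_group_add \<Rightarrow> 'm) \<Rightarrow> 'm set \<Rightarrow> bool" where
  "finite_length scale B \<longleftrightarrow> (\<exists>N. \<forall>n (W::nat \<Rightarrow> 'm set).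
     (\<forall>i\<le>n. module.subspace scale (W i) \<and> W i \<subseteq> B) \<and> (\<forall>i<n. W i \<subset> W (Suc i)) \<longrightarrow> n \<le> N)"

definition p_module :: "('r::comm_ring_1 \<Rightarrow> 'm::ab_group_add \<Rightarrow> 'm) \<Rightarrow> 'r \<Rightarrow> 'm set \<Rightarrow> bool" where
  "p_module scale p B \<longleftrightarrow> module.subspace scale B \<and> finite_length scale B \<and>
     (\<exists>n. pmul scale p n B = {0})"

text \<open>Dimension over k = R/(p) of the quotient V/U (for submodules U \<subseteq> V with p V \<subseteq> U):
  the maximal number of elements of V whose classes are k-linearly independent in V/U.\<close>
definition dimk :: "('r::comm_ring_1 \<Rightarrow> 'm::ab_group_add \<Rightarrow> 'm) \<Rightarrow> 'r \<Rightarrow> 'm set \<Rightarrow> 'm set \<Rightarrow> nat" where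
  "dimk scale p U V = Sup {n. \<exists>v::nat \<Rightarrow> 'm. (\<forall>i<n. v i \<in> V) \<and>
      (\<forall>c::nat \<Rightarrow> 'r. (\<Sum>i<n. scale (c i) (v i)) \<in> U \<longrightarrow> (\<forall>i<n. p dvd c i))}"

text \<open>A partition is a function nat \<Rightarrow> nat, its parts being the values at 1, 2, 3, ...
  (value at 0 is 0 by convention). conj gives the conjugate partition.\<close>
definition conj :: "(nat \<Rightarrow> nat) \<Rightarrow> nat \<Rightarrow> nat" where
  "conj \<beta> m = (if m = 0 then 0 else card {j. 1 \<le> j \<and> m \<le> \<beta> j})"

text \<open>type(B/N) for submodules N \<subseteq> B: the partition whose conjugate has i-th part
  dim_k p^(i-1)(B/N) / p^i(B/N) = dim_k (p^(i-1)B + N)/(p^i B + N).\<close>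
definition mtype :: "('r::comm_ring_1 \<Rightarrow> 'm::ab_group_add \<Rightarrow> 'm) \<Rightarrow> 'r \<Rightarrow> 'm set \<Rightarrow> 'm set \<Rightarrow> nat \<Rightarrow> nat" where
  "mtype scale p B N = conj (\<lambda>i. if i = 0 then 0 else
      dimk scale p (msum (pmul scale p i B) N) (msum (pmul scale p (i - 1) B) N))"

definition boxes :: "(nat \<Rightarrow> nat) \<Rightarrow> (nat \<times> nat) set" where
  "boxes lam = {(m, c). 1 \<le> m \<and> 1 \<le> c \<and> m \<le> lam c}"

definition expo :: "('r::comm_ring_1 \<Rightarrow> 'm::ab_group_add \<Rightarrow> 'm) \<Rightarrow> 'r \<Rightarrow> 'm set \<Rightarrow> nat" where
  "expo scale p A = (LEAST e. pmul scale p e A = {0})"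

definition kgamma :: "('r::comm_ring_1 \<Rightarrow> 'm::ab_group_add \<Rightarrow> 'm) \<Rightarrow> 'r \<Rightarrow> 'm set \<Rightarrow> 'm set \<Rightarrow> nat \<Rightarrow> nat \<Rightarrow> nat" where
  "kgamma scale p A B i = mtype scale p B (pmul scale p i A)"

definition kgamma2 :: "('r::comm_ring_1 \<Rightarrow> 'm::ab_group_add \<Rightarrow> 'm) \<Rightarrow> 'r \<Rightarrow> 'm set \<Rightarrow> 'm set \<Rightarrow> nat \<Rightarrow> nat \<Rightarrow> nat \<Rightarrow> nat" where
  "kgamma2 scale p A B l r = mtype scale p B
      (msum (pmul scale p l A) (pmul scale p 1 (pmul scale p (l - 2) A \<inter> pmul scale p r B)))"

text \<open>Outside the skew diagram the map is set to 0 (convention making it a total function).\<close>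
definition kphi :: "('r::comm_ring_1 \<Rightarrow> 'm::ab_group_add \<Rightarrow> 'm) \<Rightarrow> 'r \<Rightarrow> 'm set \<Rightarrow> 'm set \<Rightarrow> nat \<Rightarrow> nat \<times> nat \<Rightarrow> nat" where
  "kphi scale p A B l = (let S = boxes (kgamma scale p A B l) - boxes (kgamma scale p A B (l - 1)) in
     THE f. (\<forall>x. x \<notin> S \<longrightarrow> f x = 0) \<and> (\<forall>x\<in>S. 0 < f x) \<and>
       (\<forall>m c c'. (m, c) \<in> S \<and> (m, c') \<in> S \<and> c \<le> c' \<longrightarrow> f (m, c) \<le> f (m, c')) \<and>
       (\<forall>m r. 1 \<le> m \<and> 1 \<le> r \<longrightarrow>
          int (card {c. (m, c) \<in> S \<and> f (m, c) = r}) =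
          int (conj (kgamma2 scale p A B l r) m) - int (conj (kgamma2 scale p A B l (r - 1)) m)))"

type_synonym klein_tableau = "(nat \<Rightarrow> nat) list \<times> (nat \<times> nat \<Rightarrow> nat) list"

definition klein :: "('r::comm_ring_1 \<Rightarrow> 'm::ab_group_add \<Rightarrow> 'm) \<Rightarrow> 'r \<Rightarrow> 'm set \<Rightarrow> 'm set \<Rightarrow> klein_tableau" where
  "klein scale p A B = (let e = expo scale p A in
     (map (kgamma scale p A B) [0..<Suc e], map (kphi scale p A B) [2..<Suc e]))"

text \<open>Restriction Pi|_u^l = [gamma^{l-u}, ..., gamma^l; phi^{l-u+2}, ..., phi^l]
  (gammas stored from index 0, phis from index 2).\<close>
definition restr :: "klein_tableau \<Rightarrow> nat \<Rightarrow> nat \<Rightarrow> klein_tableau" where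
  "restr T u l = (take (Suc u) (drop (l - u) (fst T)), take (u - 1) (drop (l - u) (snd T)))"

end

theory Submission
  imports Defs
begin

lemma pmul_pmul:
  assumes md: "module scale"
  shows "pmul scale p i (pmul scale p s A) = pmul scale p (i + s) A"
  unfolding pmul_def using module.scale_scale[OF md]
  by (auto simp: power_add) (metis mult.commute)+

lemma map_plus_upt: "map (\<lambda>i. i + s) [a..<(n::nat)] = [a + s..<n + s]"
  by (induct n) auto

lemma kgamma_sh:
  assumes md: "module scale"
  shows "kgamma scale p (pmul scale p s A) B i = kgamma scale p A B (i + s)"
  unfolding kgamma_def by (simp add: pmul_pmul[OF md])

lemma kgamma2_sh:
  assumes md: "module scale" and l: "2 \<le> l"
  shows "kgamma2 scale p (pmul scale p s A) B l r = kgamma2 scale p A B (l + s) r"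
proof -
  have "l - 2 + s = l + s - 2" using l by simp
  then show ?thesis unfolding kgamma2_def by (simp add: pmul_pmul[OF md])
qed

lemma kphi_sh:
  assumes md: "module scale" and l: "2 \<le> l"
  shows "kphi scale p (pmul scale p s A) B l = kphi scale p A B (l + s)"
proof -
  have a: "kgamma scale p (pmul scale p s A) B l = kgamma scale p A B (l + s)"
    by (rule kgamma_sh[OF md])
  have b: "kgamma scale p (pmul scale p s A) B (l - 1) = kgamma scale p A B (l + s - 1)"
    using kgamma_sh[OF md, of p s A B "l - 1"] l by simp
  have c: "kgamma2 scale p (pmul scale p s A) B l = kgamma2 scale p A B (l + s)"
    using kgamma2_sh[OF md l] by blast
  show ?thesis unfolding kphi_def a b c ..
qed

lemma expo_sh:
  assumes md: "module scale" and ex: "\<exists>e. pmul scale p e A = {0}"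
    and se: "s \<le> expo scale p A" and ne: "0 \<in> A"
  shows "expo scale p (pmul scale p s A) = expo scale p A - s"
proof -
  have mono: "pmul scale p e' A = {0}" if "pmul scale p e A = {0}" "e \<le> e'" for e e'
  proof -
    have "pmul scale p e' A = pmul scale p (e' - e) (pmul scale p e A)"
      using pmul_pmul[OF md] that(2) by simp
    also have "\<dots> = pmul scale p (e' - e) {0}" by (simp only: that(1))
    also have "\<dots> = {0}" unfolding pmul_def
      using module.scale_zero_right[OF md] by simp
    finally show ?thesis .
  qed
  let ?P = "\<lambda>e. pmul scale p e A = {0}"
  have Pe: "?P (expo scale p A)" unfolding expo_def using ex by (rule LeastI_ex)
  have le: "\<And>e. ?P e \<Longrightarrow> expo scale p A \<le> e" unfolding expo_def by (rule Least_le)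
  show ?thesis unfolding expo_def[of scale p "pmul scale p s A"] pmul_pmul[OF md]
  proof (rule Least_equality)
    show "pmul scale p (expo scale p A - s + s) A = {0}" using Pe se by simp
    fix y assume "pmul scale p (y + s) A = {0}"
    then have "expo scale p A \<le> y + s" by (rule le)
    then show "expo scale p A - s \<le> y" by simp
  qed
qed

theorem lemma6:
  fixes scale :: "'r::idom \<Rightarrow> 'm::ab_group_add \<Rightarrow> 'm"
    and p :: 'r and A B :: "'m set" and s :: nat
  assumes PID: "is_PID TYPE('r)"
    and pmax: "maximal_ideal (pideal p)"
    and md: "module scale"
    and Bp: "p_module scale p B"
    and As: "module.subspace scale A"
    and AB: "A \<subseteq> B"
    and se: "s \<le> expo scale p A"
  shows "klein scale p (pmul scale p s A) B =
           (map (kgamma scale p A B) [s..<Suc (expo scale p A)],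
            map (kphi scale p A B) [s + 2..<Suc (expo scale p A)])
       \<and> klein scale p (pmul scale p s A) B =
           restr (klein scale p A B) (expo scale p A - s) (expo scale p A)"
proof -
  have ne: "0 \<in> A" using As module.subspace_0[OF md] by blast
  obtain n where n: "pmul scale p n B = {0}" using Bp unfolding p_module_def by blast
  have "pmul scale p n A = {0}"
  proof -
    have "pmul scale p n A \<subseteq> pmul scale p n B" using AB unfolding pmul_def by blast
    moreover have "0 \<in> pmul scale p n A" unfolding pmul_def
      using ne module.scale_zero_right[OF md] by force
    ultimately show ?thesis using n by blast
  qed
  then have ex: "\<exists>e. pmul scale p e A = {0}" by blast
  define e where "e = expo scale p A"
  have es: "expo scale p (pmul scale p s A) = e - s"
    using expo_sh[OF md ex se ne] e_def by simp
  have g: "map (kgamma scale p (pmul scale p s A) B) [0..<Suc (e - s)]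
         = map (kgamma scale p A B) [s..<Suc e]"
  proof -
    have "map (kgamma scale p (pmul scale p s A) B) [0..<Suc (e - s)]
        = map (kgamma scale p A B) (map (\<lambda>i. i + s) [0..<Suc (e - s)])"
      by (simp add: kgamma_sh[OF md])
    also have "map (\<lambda>i. i + s) [0..<Suc (e - s)] = [s..<Suc e]"
      using se e_def by (simp add: map_add_upt)
    finally show ?thesis .
  qed
  have f: "map (kphi scale p (pmul scale p s A) B) [2..<Suc (e - s)]
         = map (kphi scale p A B) [s + 2..<Suc e]"
  proof -
    have "map (kphi scale p (pmul scale p s A) B) [2..<Suc (e - s)]
        = map (kphi scale p A B) (map (\<lambda>i. i + s) [2..<Suc (e - s)])"
      unfolding map_map by (rule map_cong[OF refl]) (simp only: o_def set_upt, rule kphi_sh[OF md], simp)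
    also have "map (\<lambda>i. i + s) [2..<Suc (e - s)] = [s + 2..<Suc e]"
    proof -
      have "map (\<lambda>i. i + s) [2..<Suc (e - s)] = [2 + s..<Suc (e - s) + s]"
        by (rule map_plus_upt)
      then show ?thesis using se e_def by (simp add: add.commute)
    qed
    finally show ?thesis .
  qed
  have K: "klein scale p (pmul scale p s A) B =
           (map (kgamma scale p A B) [s..<Suc e], map (kphi scale p A B) [s + 2..<Suc e])"
    unfolding klein_def Let_def es g f ..
  have R: "restr (klein scale p A B) (e - s) e =
           (map (kgamma scale p A B) [s..<Suc e], map (kphi scale p A B) [s + 2..<Suc e])"
  proof -
    have k: "klein scale p A B = (map (kgamma scale p A B) [0..<Suc e], map (kphi scale p A B) [2..<Suc e])"
      unfolding klein_def Let_def e_def ..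
    have d1: "drop s [0..<Suc e] = [s..<Suc e]" by simp
    have d2: "drop s [2..<Suc e] = [s + 2..<Suc e]" by (simp only: drop_upt add.commute)
    have l1: "length [s..<Suc e] = Suc (e - s)" using se e_def by simp
    have l2: "length [s + 2..<Suc e] = e - s - 1" unfolding length_upt by presburger
    have ee: "e - (e - s) = s" using se e_def by simp
    have t1: "take (Suc (e - s)) [s..<Suc e] = [s..<Suc e]" by (simp only: take_all l1 order_refl)
    have t2: "take (e - s - 1) [s + 2..<Suc e] = [s + 2..<Suc e]" by (simp only: take_all l2 order_refl)
    have "restr (klein scale p A B) (e - s) e =
       (take (Suc (e - s)) (drop s (map (kgamma scale p A B) [0..<Suc e])),
        take (e - s - 1) (drop s (map (kphi scale p A B) [2..<Suc e])))"
      unfolding restr_def k ee by (simp only: fst_conv snd_conv)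
    also have "\<dots> = (map (kgamma scale p A B) (take (Suc (e - s)) (drop s [0..<Suc e])),
        map (kphi scale p A B) (take (e - s - 1) (drop s [2..<Suc e])))"
      by (simp only: drop_map take_map)
    also have "\<dots> = (map (kgamma scale p A B) [s..<Suc e], map (kphi scale p A B) [s + 2..<Suc e])"
      by (simp only: d1 d2 t1 t2)
    finally show ?thesis .
  qed
  have K': "klein scale p (pmul scale p s A) B =
           (map (kgamma scale p A B) [s..<Suc (expo scale p A)],
            map (kphi scale p A B) [s + 2..<Suc (expo scale p A)])" using K unfolding e_def .
  have R': "restr (klein scale p A B) (expo scale p A - s) (expo scale p A) =
           (map (kgamma scale p A B) [s..<Suc (expo scale p A)],
            map (kphi scale p A B) [s + 2..<Suc (expo scale p A)])" using R unfolding e_def .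
  show ?thesis
  proof
    show "klein scale p (pmul scale p s A) B =
           (map (kgamma scale p A B) [s..<Suc (expo scale p A)],
            map (kphi scale p A B) [s + 2..<Suc (expo scale p A)])" by (rule K')
    show "klein scale p (pmul scale p s A) B =
           restr (klein scale p A B) (expo scale p A - s) (expo scale p A)"
      using K' R' by (rule trans[OF _ sym])
  qed
qed

end
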